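(* Let $n\ge1$ and $s\ge0$ be integers such that $\lambda=3^{(n+s-1)/2}$ is an integer. Let $D_0,D_1,D_2$ be a partition of $\mathbb{F}_{3^n}$ such that each $D_i$ is a partial geometric difference set in the additive group of $\mathbb{F}_{3^n}$ and $\chi_a(D_i)\in\{0,\pm\lambda,\pm\lambda\zeta_3,\pm\lambda\zeta_3^2\}$ for every $a\in\mathbb{F}_{3^n}^*$ and $i=0,1,2$. Suppose one of the following holds: (1) $|D_0|=|D_1|=|D_2|$; (2) for some ordering $\{i,j,k\}=\{0,1,2\}$, $|D_i|=|D_j|=3^{n-1}-3^{(n+s-2)/2}$ and $|D_k|=3^{n-1}+2\cdot3^{(n+s-2)/2}$; (3) for some ordering $\{i,j,k\}=\{0,1,2\}$, $|D_i|=|D_j|=3^{n-1}+3^{(n+s-2)/2}$ and $|D_k|=3^{n-1}-2\cdot3^{(n+s-2)/2}$. Suppose further that $|\langle z_a,e\rangle|^2\in\{0,3\lambda^2\}$ for every $a\in\mathbb{F}_{3^n}^*$. Then the function $f:\mathbb{F}_{3^n}\to\mathbb{F}_3$ defined by $f(x)=i$ for $x\in D_i$ is $s$-plateaued.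
   Context: $\zeta_3=e^{2\pi i/3}$, $Tr_n(z)=\sum_{i=0}^{n-1}z^{3^i}$. For $a\in\mathbb{F}_{3^n}$, $\chi_a$ is the additive character $\chi_a(x)=\zeta_3^{Tr_n(ax)}$, and $\chi_a(S)=\sum_{x\in S}\chi_a(x)$. $z_a=(\chi_a(D_0),\chi_a(D_1),\chi_a(D_2))\in\mathbb{C}^3$, $e=(1,\zeta_3,\zeta_3^2)$, and $\langle u,w\rangle=\sum_i u_i\overline{w_i}$ is the complex inner product. Partial geometric difference set: $S\subseteq G$ ($G$ abelian of order $v$, $|S|=k$, $v>k>2$) such that, with $\delta(g)=|\{(s,t)\in S\times S:g=s-t\}|$, $\sum_{y\in S}\delta(x-y)$ equals a constant $\alpha$ for $x\notin S$ and a constant $\beta$ for $x\in S$. A function $f:\mathbb{F}_{3^n}\to\mathbb{F}_3$ is $s$-plateaued if $|\widehat f(\mu)|\in\{0,3^{(n+s)/2}\}$ for all $\mu$, where $\widehat f(\mu)=\sum_{x}\zeta_3^{f(x)-Tr_n(\mu x)}$. *)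

theory Defs
  imports Complex_Main
begin

definition zeta3 :: complex where
  "zeta3 = cis (2 * pi / 3)"

definition trace3 :: "nat \<Rightarrow> 'a::field \<Rightarrow> 'a" where
  "trace3 n z = (\<Sum>i<n. z ^ (3 ^ i))"

definition f3_rep :: "'a::field \<Rightarrow> nat" where
  "f3_rep t = (THE k. k < 3 \<and> of_nat k = t)"

definition addchar :: "nat \<Rightarrow> 'a::field \<Rightarrow> 'a \<Rightarrow> complex" where
  "addchar n a x = zeta3 ^ f3_rep (trace3 n (a * x))"

definition addchar_set :: "nat \<Rightarrow> 'a::field \<Rightarrow> 'a set \<Rightarrow> complex" where
  "addchar_set n a S = (\<Sum>x\<in>S. addchar n a x)"

definition diff_count :: "'a::ab_group_add set \<Rightarrow> 'a \<Rightarrow> nat" where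
  "diff_count S g = card {(s, t). s \<in> S \<and> t \<in> S \<and> g = s - t}"

definition partial_geometric_difference_set :: "'a::{ab_group_add,finite} set \<Rightarrow> bool" where
  "partial_geometric_difference_set S \<longleftrightarrow>
     card (UNIV :: 'a set) > card S \<and> card S > 2 \<and>
     (\<exists>\<alpha> \<beta>. (\<forall>x. x \<notin> S \<longrightarrow> (\<Sum>y\<in>S. diff_count S (x - y)) = \<alpha>) \<and>
             (\<forall>x. x \<in> S \<longrightarrow> (\<Sum>y\<in>S. diff_count S (x - y)) = \<beta>))"

text \<open>Walsh transform of f : F_{3^n} -> F_3, with F_3 represented by {0,1,2}.\<close>
definition walsh3 :: "nat \<Rightarrow> ('a::{field,finite} \<Rightarrow> nat) \<Rightarrow> 'a \<Rightarrow> complex" where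
  "walsh3 n f \<mu> = (\<Sum>x\<in>UNIV. zeta3 powi (int (f x) - int (f3_rep (trace3 n (\<mu> * x)))))"

definition plateaued3 :: "nat \<Rightarrow> nat \<Rightarrow> ('a::{field,finite} \<Rightarrow> nat) \<Rightarrow> bool" where
  "plateaued3 n s f \<longleftrightarrow>
     (\<forall>\<mu>. cmod (walsh3 n f \<mu>) \<in> {0, 3 powr ((real n + real s) / 2)})"

end

theory Submission
  imports Defs
begin

lemma z_cube: "zeta3 ^ 3 = 1"
  unfolding zeta3_def DeMoivre by simp

lemma z_norm: "cmod zeta3 = 1"
  unfolding zeta3_def by simp

lemma z_ne1: "zeta3 \<noteq> 1"
proof
  assume "zeta3 = 1"
  then have "Re zeta3 = 1" by simp
  moreover have "Re zeta3 = -1/2" unfolding zeta3_def by (simp add: cos_120)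
  ultimately show False by simp
qed

lemma z_sum: "1 + zeta3 + zeta3^2 = 0"
proof -
  have "(zeta3 - 1) * (1 + zeta3 + zeta3^2) = zeta3^3 - 1" by (simp add: algebra_simps power2_eq_square power3_eq_cube)
  also have "\<dots> = 0" using z_cube by simp
  finally show ?thesis using z_ne1 by simp
qed

lemma z_pow_norm: "cmod (zeta3 ^ k) = 1"
  by (simp add: norm_power z_norm)

lemma unit_cnj:
  assumes "cmod w = 1" shows "cnj w = inverse w"
proof -
  have "w * cnj w = 1" using complex_norm_square[of w] assms by simp
  then show ?thesis using inverse_unique by metis
qed

lemma z_powi: "zeta3 powi (int a - int b) = zeta3 ^ a * cnj (zeta3 ^ b)"
proof -
  have nz: "zeta3 \<noteq> 0" using z_norm by auto
  have "zeta3 powi (int a - int b) = zeta3 powi int a / zeta3 powi int b"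
    using nz by (simp add: power_int_diff)
  also have "\<dots> = zeta3 ^ a * inverse (zeta3 ^ b)" by (simp add: divide_inverse)
  also have "inverse (zeta3 ^ b) = cnj (zeta3 ^ b)" using unit_cnj[OF z_pow_norm] by simp
  finally show ?thesis .
qed

lemma walsh_decomp:
  fixes D :: "nat \<Rightarrow> 'a::{field,finite} set" and f :: "'a \<Rightarrow> nat"
  assumes part_cover: "(\<Union>i<3. D i) = UNIV"
    and part_disj: "\<forall>i<3. \<forall>j<3. i \<noteq> j \<longrightarrow> D i \<inter> D j = {}"
    and f_def: "\<forall>i<3. \<forall>x\<in>D i. f x = i"
  shows "walsh3 n f \<mu> = (\<Sum>i<3. zeta3^i * cnj (addchar_set n \<mu> (D i)))"
proof -
  let ?g = "\<lambda>x. zeta3 powi (int (f x) - int (f3_rep (trace3 n (\<mu> * x))))"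
  have "walsh3 n f \<mu> = sum ?g (\<Union>i<3. D i)" unfolding walsh3_def part_cover ..
  also have "\<dots> = (\<Sum>i<3. sum ?g (D i))"
    by (rule sum.UNION_disjoint) (use part_disj in auto)
  also have "\<dots> = (\<Sum>i<3. zeta3^i * cnj (addchar_set n \<mu> (D i)))"
  proof (rule sum.cong[OF refl])
    fix i assume i: "i \<in> {..<3::nat}"
    have "sum ?g (D i) = (\<Sum>x\<in>D i. zeta3^i * cnj (addchar n \<mu> x))"
      by (rule sum.cong[OF refl]) (use i f_def in \<open>auto simp: z_powi addchar_def\<close>)
    also have "\<dots> = zeta3^i * cnj (addchar_set n \<mu> (D i))"
      by (simp add: addchar_set_def sum_distrib_left)
    finally show "sum ?g (D i) = zeta3^i * cnj (addchar_set n \<mu> (D i))" .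
  qed
  finally show ?thesis .
qed

lemma sum3:
  fixes c :: "nat \<Rightarrow> real" and a b :: real
  assumes h: "\<forall>m<3. c m = a + (if m = k then b else 0)" and k: "k < (3::nat)"
  shows "(\<Sum>m<3. complex_of_real (c m) * zeta3^m) = complex_of_real b * zeta3^k"
proof -
  have "(\<Sum>m<3. complex_of_real (c m) * zeta3^m) = c 0 + c 1 * zeta3 + c 2 * zeta3^2"
    by (simp add: numeral_3_eq_3 lessThan_Suc eval_nat_numeral)
  also have "\<dots> = a * (1 + zeta3 + zeta3^2) + b * zeta3^k"
  proof -
    have "k = 0 \<or> k = 1 \<or> k = 2" using k by linarith
    moreover have "c 0 = a + (if 0 = k then b else 0)" using h by simp
    moreover have "c 1 = a + (if 1 = k then b else 0)" using h by simp
    moreover have "c 2 = a + (if 2 = k then b else 0)" using h by simp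
    ultimately show ?thesis by (elim disjE) (simp_all add: algebra_simps)
  qed
  finally show ?thesis using z_sum by simp
qed

theorem mainTheorem6:
  fixes n s :: nat and D :: "nat \<Rightarrow> 'a::{field,finite} set" and f :: "'a \<Rightarrow> nat"
  defines "lam \<equiv> 3 powr ((real n + real s - 1) / 2)"
  assumes card_F: "card (UNIV :: 'a set) = 3 ^ n"
    and n_pos: "n \<ge> 1"
    and lam_int: "lam \<in> \<int>"
    and part_cover: "(\<Union>i<3. D i) = UNIV"
    and part_disj: "\<forall>i<3. \<forall>j<3. i \<noteq> j \<longrightarrow> D i \<inter> D j = {}"
    and pgds: "\<forall>i<3. partial_geometric_difference_set (D i)"
    and char_vals: "\<forall>a. a \<noteq> 0 \<longrightarrow> (\<forall>i<3. addchar_set n a (D i) \<in>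
        {0, complex_of_real lam, - complex_of_real lam,
         complex_of_real lam * zeta3, - complex_of_real lam * zeta3,
         complex_of_real lam * zeta3^2, - complex_of_real lam * zeta3^2})"
    and sizes:
      "(card (D 0) = card (D 1) \<and> card (D 1) = card (D 2)) \<or>
       (\<exists>i j k. {i, j, k} = {0, 1, 2::nat} \<and>
          real (card (D i)) = 3 ^ (n - 1) - 3 powr ((real n + real s - 2) / 2) \<and>
          real (card (D j)) = 3 ^ (n - 1) - 3 powr ((real n + real s - 2) / 2) \<and>
          real (card (D k)) = 3 ^ (n - 1) + 2 * 3 powr ((real n + real s - 2) / 2)) \<or>
       (\<exists>i j k. {i, j, k} = {0, 1, 2::nat} \<and>
          real (card (D i)) = 3 ^ (n - 1) + 3 powr ((real n + real s - 2) / 2) \<and>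
          real (card (D j)) = 3 ^ (n - 1) + 3 powr ((real n + real s - 2) / 2) \<and>
          real (card (D k)) = 3 ^ (n - 1) - 2 * 3 powr ((real n + real s - 2) / 2))"
    and inner_vals: "\<forall>a. a \<noteq> 0 \<longrightarrow>
        (cmod (\<Sum>i<3. addchar_set n a (D i) * cnj (zeta3 ^ i)))\<^sup>2 \<in> {0, 3 * lam\<^sup>2}"
    and f_def: "\<forall>i<3. \<forall>x\<in>D i. f x = i"
  shows "plateaued3 n s f"
proof -
  let ?P = "3 powr ((real n + real s) / 2)"
  let ?B = "3 powr ((real n + real s - 2) / 2)"
  have key: "?P = 3 * ?B"
  proof -
    have "3 * ?B = 3 powr 1 * ?B" by simp
    also have "\<dots> = 3 powr (1 + (real n + real s - 2) / 2)" by (simp add: powr_add)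
    also have "1 + (real n + real s - 2) / 2 = (real n + real s) / 2" by (simp add: field_simps)
    finally show ?thesis by simp
  qed
  have Bpos: "?B > 0" by simp
  have lam2: "3 * lam\<^sup>2 = ?P\<^sup>2"
  proof -
    have e1: "(real n + real s - 1) / 2 + (real n + real s - 1) / 2 = real n + real s - 1" by simp
    have "lam\<^sup>2 = 3 powr (real n + real s - 1)"
      unfolding lam_def power2_eq_square powr_add[symmetric] e1 ..
    moreover have e2: "(real n + real s) / 2 + (real n + real s) / 2 = real n + real s" by simp
    moreover have "?P\<^sup>2 = 3 powr (real n + real s)"
      unfolding power2_eq_square powr_add[symmetric] e2 ..
    moreover have "3 * 3 powr (real n + real s - 1) = (3::real) powr (real n + real s)"
      by (simp add: powr_diff)
    ultimately show ?thesis by simp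
  qed
  show ?thesis unfolding plateaued3_def
  proof
    fix \<mu> :: 'a
    have dec: "walsh3 n f \<mu> = (\<Sum>i<3. zeta3^i * cnj (addchar_set n \<mu> (D i)))"
      by (rule walsh_decomp[OF part_cover part_disj f_def])
    show "cmod (walsh3 n f \<mu>) \<in> {0, ?P}"
    proof (cases "\<mu> = 0")
      case False
      let ?S = "\<Sum>i<3. addchar_set n \<mu> (D i) * cnj (zeta3 ^ i)"
      have "walsh3 n f \<mu> = cnj ?S" unfolding dec by (simp add: mult.commute)
      then have eq: "cmod (walsh3 n f \<mu>) = cmod ?S" by (metis complex_mod_cnj)
      have "(cmod ?S)\<^sup>2 \<in> {0, ?P\<^sup>2}" using inner_vals False lam2 by auto
      then have "cmod ?S \<in> {0, ?P}"
        by (auto intro: power2_eq_imp_eq)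
      then show ?thesis using eq by simp
    next
      case True
      define c where "c = f3_rep (trace3 n (0::'a))"
      have ac: "addchar_set n \<mu> (D i) = of_nat (card (D i)) * zeta3 ^ c" for i
        unfolding addchar_set_def addchar_def True c_def by simp
      have "walsh3 n f \<mu> = cnj (zeta3 ^ c) * (\<Sum>i<3. complex_of_real (real (card (D i))) * zeta3 ^ i)"
        unfolding dec ac by (simp add: sum_distrib_left algebra_simps)
      then have eq: "cmod (walsh3 n f \<mu>) = cmod (\<Sum>i<3. complex_of_real (real (card (D i))) * zeta3 ^ i)"
        by (simp add: norm_mult norm_power z_norm)
      from sizes show ?thesis
      proof (elim disjE exE conjE)
        assume h: "card (D 0) = card (D 1)" "card (D 1) = card (D 2)"
        have "\<forall>m<3. real (card (D m)) = real (card (D 0)) + (if m = 0 then 0 else 0)"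
        proof (intro allI impI)
          fix m :: nat assume "m < 3" then have "m = 0 \<or> m = 1 \<or> m = 2" by linarith
          then show "real (card (D m)) = real (card (D 0)) + (if m = 0 then 0 else 0)" using h by auto
        qed
        from sum3[OF this] show ?thesis using eq by simp
      next
        fix i j k
        assume e: "{i, j, k} = {0, 1, 2::nat}"
          and hi: "real (card (D i)) = 3 ^ (n - 1) - ?B"
          and hj: "real (card (D j)) = 3 ^ (n - 1) - ?B"
          and hk: "real (card (D k)) = 3 ^ (n - 1) + 2 * ?B"
        have "k \<in> {0, 1, 2::nat}" using e by blast
        then have k3: "k < 3" by auto
        have mem: "m \<in> {i, j, k}" if "m < 3" for m proof -
          have "m = 0 \<or> m = 1 \<or> m = 2" using that by linarith
          then show ?thesis using e by blast
        qed
        have "\<forall>m<3. real (card (D m)) = (3 ^ (n - 1) - ?B) + (if m = k then 3 * ?B else 0)"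
        proof (intro allI impI)
          fix m :: nat assume "m < 3" then have "m \<in> {i, j, k}" by (rule mem)
          then show "real (card (D m)) = (3 ^ (n - 1) - ?B) + (if m = k then 3 * ?B else 0)" using hi hj hk by (cases "m = k") auto
        qed
        from sum3[OF this k3] show ?thesis using eq key Bpos by (simp add: norm_mult z_pow_norm)
      next
        fix i j k
        assume e: "{i, j, k} = {0, 1, 2::nat}"
          and hi: "real (card (D i)) = 3 ^ (n - 1) + ?B"
          and hj: "real (card (D j)) = 3 ^ (n - 1) + ?B"
          and hk: "real (card (D k)) = 3 ^ (n - 1) - 2 * ?B"
        have "k \<in> {0, 1, 2::nat}" using e by blast
        then have k3: "k < 3" by auto
        have mem: "m \<in> {i, j, k}" if "m < 3" for m proof -
          have "m = 0 \<or> m = 1 \<or> m = 2" using that by linarith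
          then show ?thesis using e by blast
        qed
        have "\<forall>m<3. real (card (D m)) = (3 ^ (n - 1) + ?B) + (if m = k then - (3 * ?B) else 0)"
        proof (intro allI impI)
          fix m :: nat assume "m < 3" then have "m \<in> {i, j, k}" by (rule mem)
          then show "real (card (D m)) = (3 ^ (n - 1) + ?B) + (if m = k then - (3 * ?B) else 0)" using hi hj hk by (cases "m = k") auto
        qed
        from sum3[OF this k3] show ?thesis using eq key Bpos by (simp add: norm_mult z_pow_norm)
      qed
    qed
  qed
qed

end
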